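(* Let $(\mu_0^4,\cdot,[-,-])$ be a transposed Poisson algebra structure on the associative algebra $\mu_0^4$. Then it is isomorphic to one of the following pairwise non-isomorphic algebras: $\mathbf{TP}(1,0,0)$, $\mathbf{TP}(0,\alpha,0)$ with $\alpha\in\mathbb{C}$, or $\mathbf{TP}(0,0,1)$.
   Context: $\mu_0^4$ is the complex commutative associative algebra with basis $\{e_1,\dots,e_4\}$ and $e_i\cdot e_j=e_{i+j}$ for $2\leq i+j\leq 4$, other products zero. A transposed Poisson algebra is a triple $(\mathfrak{L},\cdot,[-,-])$ with $(\mathfrak{L},\cdot)$ commutative associative, $(\mathfrak{L},[-,-])$ a Lie algebra, and $2z\cdot[x,y]=[z\cdot x,y]+[x,z\cdot y]$ for all $x,y,z$. For $\alpha_2,\alpha_3,\alpha_4\in\mathbb{C}$, $\mathbf{TP}(\alpha_2,\alpha_3,\alpha_4)$ denotes $\mu_0^4$ with the bracket $[e_i,e_j]=(j-i)\sum_{t=i+j-1}^{4}\alpha_{t-i-j+3}e_t$ for $3\leq i+j\leq 5$, all other brackets of basis elements zero. Isomorphisms preserve both operations. *)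

theory Defs
  imports Complex_Main "HOL-Library.Function_Algebras"
begin

text \<open>The 4-dimensional complex vector space with basis e_1,...,e_4 is modelled as
  the functions nat => complex supported on {1..4}; the coordinate of index k is
  the coefficient of e_k.\<close>

definition V4 :: "(nat \<Rightarrow> complex) set" where
  "V4 = {v. \<forall>k. (k < 1 \<or> 4 < k) \<longrightarrow> v k = 0}"

definition smul :: "complex \<Rightarrow> (nat \<Rightarrow> complex) \<Rightarrow> (nat \<Rightarrow> complex)" where
  "smul c v = (\<lambda>k. c * v k)"

text \<open>Bilinear map on V4 given by structure constants: f i j k is the coefficient of
  e_k in the product of e_i and e_j.\<close>
definition bil :: "(nat \<Rightarrow> nat \<Rightarrow> nat \<Rightarrow> complex) \<Rightarrow> (nat \<Rightarrow> complex) \<Rightarrow> (nat \<Rightarrow> complex) \<Rightarrow> (nat \<Rightarrow> complex)" where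
  "bil f x y = (\<lambda>k. if 1 \<le> k \<and> k \<le> 4
      then (\<Sum>i\<in>{1..4}. \<Sum>j\<in>{1..4}. x i * y j * f i j k) else 0)"

definition mu04 :: "(nat \<Rightarrow> complex) \<Rightarrow> (nat \<Rightarrow> complex) \<Rightarrow> (nat \<Rightarrow> complex)" where
  "mu04 = bil (\<lambda>i j k. if 2 \<le> i + j \<and> i + j \<le> 4 \<and> k = i + j then 1 else 0)"

text \<open>The bracket of TP(a2,a3,a4):
  [e_i,e_j] = (j-i) * sum_{t=i+j-1}^{4} alpha_{t-i-j+3} e_t for 3 <= i+j <= 5.\<close>
definition alph :: "complex \<Rightarrow> complex \<Rightarrow> complex \<Rightarrow> nat \<Rightarrow> complex" where
  "alph a2 a3 a4 m = (if m = 2 then a2 else if m = 3 then a3 else if m = 4 then a4 else 0)"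

definition TPbr :: "complex \<Rightarrow> complex \<Rightarrow> complex \<Rightarrow> (nat \<Rightarrow> complex) \<Rightarrow> (nat \<Rightarrow> complex) \<Rightarrow> (nat \<Rightarrow> complex)" where
  "TPbr a2 a3 a4 = bil (\<lambda>i j k.
      if 3 \<le> i + j \<and> i + j \<le> 5 \<and> i + j - 1 \<le> k \<and> k \<le> 4
      then of_int (int j - int i) * alph a2 a3 a4 (k + 3 - (i + j)) else 0)"

definition is_TP_structure :: "((nat \<Rightarrow> complex) \<Rightarrow> (nat \<Rightarrow> complex) \<Rightarrow> (nat \<Rightarrow> complex)) \<Rightarrow> bool" where
  "is_TP_structure br \<longleftrightarrow>
     (\<forall>x\<in>V4. \<forall>y\<in>V4. br x y \<in> V4) \<and>
     (\<forall>x\<in>V4. \<forall>y\<in>V4. \<forall>z\<in>V4. \<forall>c. br (x + smul c y) z = br x z + smul c (br y z)) \<and>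
     (\<forall>x\<in>V4. \<forall>y\<in>V4. \<forall>z\<in>V4. \<forall>c. br z (x + smul c y) = br z x + smul c (br z y)) \<and>
     (\<forall>x\<in>V4. br x x = 0) \<and>
     (\<forall>x\<in>V4. \<forall>y\<in>V4. \<forall>z\<in>V4. br x (br y z) + br y (br z x) + br z (br x y) = 0) \<and>
     (\<forall>x\<in>V4. \<forall>y\<in>V4. \<forall>z\<in>V4.
        smul 2 (mu04 z (br x y)) = br (mu04 z x) y + br x (mu04 z y))"

definition TP_iso :: "((nat \<Rightarrow> complex) \<Rightarrow> (nat \<Rightarrow> complex) \<Rightarrow> (nat \<Rightarrow> complex)) \<Rightarrow>
    ((nat \<Rightarrow> complex) \<Rightarrow> (nat \<Rightarrow> complex) \<Rightarrow> (nat \<Rightarrow> complex)) \<Rightarrow> bool" where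
  "TP_iso br1 br2 \<longleftrightarrow> (\<exists>\<phi>. bij_betw \<phi> V4 V4 \<and>
     (\<forall>x\<in>V4. \<forall>y\<in>V4. \<forall>c. \<phi> (x + smul c y) = \<phi> x + smul c (\<phi> y)) \<and>
     (\<forall>x\<in>V4. \<forall>y\<in>V4. \<phi> (mu04 x y) = mu04 (\<phi> x) (\<phi> y)) \<and>
     (\<forall>x\<in>V4. \<forall>y\<in>V4. \<phi> (br1 x y) = br2 (\<phi> x) (\<phi> y)))"

end

theory Submission
  imports Defs
begin

definition bv :: "nat \<Rightarrow> nat \<Rightarrow> complex" where
  "bv i = (\<lambda>k. if k = i then 1 else 0)"

lemma sum4: "(\<Sum>i\<in>{1..4::nat}. f i) = f 1 + f 2 + f 3 + f 4"
proof -
  have "{1..4::nat} = {1,2,3,4}" by auto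
  then show ?thesis by (simp add: add.assoc)
qed

lemma k_cases:
  obtains "k = 1" | "k = 2" | "k = (3::nat)" | "k = 4" | "k \<noteq> 1" "k \<noteq> 2" "k \<noteq> 3" "k \<noteq> 4" "\<not> (1 \<le> k \<and> k \<le> 4)"
  by linarith

lemma mu04_k: "mu04 u v k = (if k = 2 then u 1 * v 1 else if k = 3 then u 1 * v 2 + u 2 * v 1
   else if k = 4 then u 1 * v 3 + u 2 * v 2 + u 3 * v 1 else 0)"
  unfolding mu04_def bil_def sum4 by (cases k rule: k_cases) auto

lemma TPbr_k: "TPbr a2 a3 a4 u v k = (if k = 2 then a2 * (u 1 * v 2 - u 2 * v 1)
   else if k = 3 then a3 * (u 1 * v 2 - u 2 * v 1) + 2 * a2 * (u 1 * v 3 - u 3 * v 1)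
   else if k = 4 then a4 * (u 1 * v 2 - u 2 * v 1) + 2 * a3 * (u 1 * v 3 - u 3 * v 1)
      + 3 * a2 * (u 1 * v 4 - u 4 * v 1) + a2 * (u 2 * v 3 - u 3 * v 2) else 0)"
  unfolding TPbr_def bil_def sum4 by (cases k rule: k_cases) (auto simp add: alph_def algebra_simps)


definition phi :: "complex \<Rightarrow> complex \<Rightarrow> complex \<Rightarrow> (nat \<Rightarrow> complex) \<Rightarrow> nat \<Rightarrow> complex" where
  "phi p1 p2 p3 v = (\<lambda>k. if k = 1 then p1 * v 1
     else if k = 2 then p2 * v 1 + p1^2 * v 2
     else if k = 3 then p3 * v 1 + 2*p1*p2 * v 2 + p1^3 * v 3
     else if k = 4 then (p2^2 + 2*p1*p3) * v 2 + 3*p1^2*p2 * v 3 + p1^4 * v 4 else 0)"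

lemma V4_out: assumes "v \<in> V4" "\<not> (1 \<le> k \<and> k \<le> 4)" shows "v k = 0"
proof -
  have "k < 1 \<or> 4 < k" using assms(2) by linarith
  then show ?thesis using assms(1) unfolding V4_def by blast
qed

lemma V4_I: assumes "\<And>k. k \<noteq> 1 \<Longrightarrow> k \<noteq> 2 \<Longrightarrow> k \<noteq> 3 \<Longrightarrow> k \<noteq> 4 \<Longrightarrow> v k = 0" shows "v \<in> V4"
  unfolding V4_def
proof (intro CollectI allI impI)
  fix k :: nat assume "k < 1 \<or> 4 < k" then show "v k = 0" using assms by auto
qed

lemma phi_V4: "phi p1 p2 p3 v \<in> V4"
  by (rule V4_I) (simp add: phi_def)

lemma phi_lin: "phi p1 p2 p3 (x + smul c y) = phi p1 p2 p3 x + smul c (phi p1 p2 p3 y)"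
  by (rule ext) (simp add: phi_def smul_def algebra_simps)

lemma phi_mu: "phi p1 p2 p3 (mu04 x y) = mu04 (phi p1 p2 p3 x) (phi p1 p2 p3 y)"
  by (rule ext) (simp add: phi_def mu04_k algebra_simps power2_eq_square power3_eq_cube power4_eq_xxxx)

lemma phi_inj: assumes "p1 \<noteq> 0" shows "inj_on (phi p1 p2 p3) V4"
proof (rule inj_onI)
  fix x y assume x: "x \<in> V4" and y: "y \<in> V4" and eq: "phi p1 p2 p3 x = phi p1 p2 p3 y"
  have e: "phi p1 p2 p3 x k = phi p1 p2 p3 y k" for k using eq by simp
  from e[of 1] assms have 1: "x 1 = y 1" by (simp add: phi_def)
  from e[of 2] assms 1 have 2: "x 2 = y 2" by (simp add: phi_def)
  from e[of 3] assms 1 2 have 3: "x 3 = y 3" by (simp add: phi_def)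
  from e[of 4] assms 1 2 3 have 4: "x 4 = y 4" by (simp add: phi_def)
  show "x = y"
  proof
    fix k show "x k = y k"
      using 1 2 3 4 V4_out[OF x, of k] V4_out[OF y, of k] by (cases k rule: k_cases) auto
  qed
qed

lemma phi_surj: assumes "p1 \<noteq> 0" shows "phi p1 p2 p3 ` V4 = V4"
proof
  show "phi p1 p2 p3 ` V4 \<subseteq> V4" using phi_V4 by auto
  show "V4 \<subseteq> phi p1 p2 p3 ` V4"
  proof
    fix w assume w: "w \<in> V4"
    define v1 where "v1 = w 1 / p1"
    define v2 where "v2 = (w 2 - p2 * v1) / p1^2"
    define v3 where "v3 = (w 3 - p3 * v1 - 2*p1*p2*v2) / p1^3"
    define v4 where "v4 = (w 4 - (p2^2 + 2*p1*p3) * v2 - 3*p1^2*p2*v3) / p1^4"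
    define v where "v = (\<lambda>k::nat. if k = 1 then v1 else if k = 2 then v2 else if k = 3 then v3 else if k = 4 then v4 else 0)"
    have "v \<in> V4" by (rule V4_I) (auto simp: v_def)
    moreover have "phi p1 p2 p3 v = w"
    proof
      fix k show "phi p1 p2 p3 v k = w k"
        using V4_out[OF w, of k] assms
        by (cases k rule: k_cases) (simp_all add: phi_def v_def v1_def v2_def v3_def v4_def field_simps)
    qed
    ultimately show "w \<in> phi p1 p2 p3 ` V4" by blast
  qed
qed

lemma phi_br:
  assumes p1: "p1 \<noteq> 0" and h1: "a2 = b2 * p1" and h2: "a3 = (2*b2*p2 + b3*p1) / p1"
    and h3: "a4 = (3*b2*p3 + 2*b3*p2 + b4*p1 - a3*p2) / p1^2"
  shows "phi p1 p2 p3 (TPbr a2 a3 a4 x y) = TPbr b2 b3 b4 (phi p1 p2 p3 x) (phi p1 p2 p3 y)"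
proof
  fix k show "phi p1 p2 p3 (TPbr a2 a3 a4 x y) k = TPbr b2 b3 b4 (phi p1 p2 p3 x) (phi p1 p2 p3 y) k"
    unfolding h3 unfolding h2 h1 using p1
    by (cases k rule: k_cases) (simp_all add: phi_def TPbr_k field_simps, simp_all add: algebra_simps eval_nat_numeral)
qed


lemma TP_iso_phi:
  assumes p1: "p1 \<noteq> 0" and h1: "a2 = b2 * p1" and h2: "a3 = (2*b2*p2 + b3*p1) / p1"
    and h3: "a4 = (3*b2*p3 + 2*b3*p2 + b4*p1 - a3*p2) / p1^2"
  shows "TP_iso (TPbr a2 a3 a4) (TPbr b2 b3 b4)"
  unfolding TP_iso_def
  apply (rule exI[of _ "phi p1 p2 p3"])
  using phi_inj[OF p1] phi_surj[OF p1] phi_lin phi_mu phi_br[OF p1 h1 h2 h3]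
  by (simp add: bij_betw_def)

lemma TP_iso_cong:
  assumes "\<forall>x\<in>V4. \<forall>y\<in>V4. br x y = br' x y" "TP_iso br' br2"
  shows "TP_iso br br2"
  using assms unfolding TP_iso_def by (metis (no_types, lifting))

lemma TP_normal:
  "TP_iso (TPbr a2 a3 a4) (TPbr 1 0 0) \<or> (\<exists>\<alpha>. TP_iso (TPbr a2 a3 a4) (TPbr 0 \<alpha> 0))
    \<or> TP_iso (TPbr a2 a3 a4) (TPbr 0 0 1)"
proof -
  consider "a2 \<noteq> 0" | "a2 = 0" "a3 \<noteq> 0" | "a2 = 0" "a3 = 0" "a4 \<noteq> 0" | "a2 = 0" "a3 = 0" "a4 = 0"
    by blast
  then show ?thesis
  proof cases
    case 1
    have "TP_iso (TPbr a2 a3 a4) (TPbr 1 0 0)"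
      by (rule TP_iso_phi[where ?p1.0 = a2 and ?p2.0 = "a3*a2/2" and ?p3.0 = "(a3*(a3*a2/2) + a4*a2^2)/3"])
         (use 1 in \<open>simp_all add: field_simps power2_eq_square\<close>)
    then show ?thesis by blast
  next
    case 2
    have "TP_iso (TPbr a2 a3 a4) (TPbr 0 a3 0)"
      by (rule TP_iso_phi[where ?p1.0 = 1 and ?p2.0 = "a4/a3" and ?p3.0 = 0])
         (use 2 in \<open>simp_all add: field_simps\<close>)
    then show ?thesis by blast
  next
    case 3
    have "TP_iso (TPbr a2 a3 a4) (TPbr 0 0 1)"
      by (rule TP_iso_phi[where ?p1.0 = "1/a4" and ?p2.0 = 0 and ?p3.0 = 0])
         (use 3 in \<open>simp_all add: field_simps power2_eq_square\<close>)
    then show ?thesis by blast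
  next
    case 4
    have "TP_iso (TPbr a2 a3 a4) (TPbr 0 0 0)"
      by (rule TP_iso_phi[where ?p1.0 = 1 and ?p2.0 = 0 and ?p3.0 = 0])
         (use 4 in \<open>simp_all\<close>)
    then show ?thesis by blast
  qed
qed

lemma bv_V4: "1 \<le> i \<Longrightarrow> i \<le> 4 \<Longrightarrow> bv i \<in> V4"
  by (rule V4_I) (auto simp: bv_def)

lemma smul1[simp]: "smul 1 w = w" by (simp add: smul_def)
lemma smul0[simp]: "smul c 0 = 0" by (simp add: smul_def fun_eq_iff)

lemma zero_V4[simp]: "0 \<in> V4" by (simp add: V4_def)
lemma plus_V4: "x \<in> V4 \<Longrightarrow> y \<in> V4 \<Longrightarrow> x + y \<in> V4" by (simp add: V4_def)
lemma smul_V4: "y \<in> V4 \<Longrightarrow> smul c y \<in> V4" by (simp add: V4_def smul_def)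

lemma iso_facts:
  assumes "TP_iso (TPbr a2 a3 a4) (TPbr b2 b3 b4)"
  obtains P where "P \<in> V4" "P 1 \<noteq> 0"
    "smul a2 (mu04 P P) + smul a3 (mu04 P (mu04 P P)) + smul a4 (mu04 P (mu04 P (mu04 P P)))
      = TPbr b2 b3 b4 P (mu04 P P)"
proof -
  obtain \<phi> where bij: "bij_betw \<phi> V4 V4"
    and lin: "\<forall>x\<in>V4. \<forall>y\<in>V4. \<forall>c. \<phi> (x + smul c y) = \<phi> x + smul c (\<phi> y)"
    and mu: "\<forall>x\<in>V4. \<forall>y\<in>V4. \<phi> (mu04 x y) = mu04 (\<phi> x) (\<phi> y)"
    and br: "\<forall>x\<in>V4. \<forall>y\<in>V4. \<phi> (TPbr a2 a3 a4 x y) = TPbr b2 b3 b4 (\<phi> x) (\<phi> y)"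
    using assms unfolding TP_iso_def by blast
  have e1: "bv 1 \<in> V4" "bv 2 \<in> V4" "bv 3 \<in> V4" "bv 4 \<in> V4" by (simp_all add: bv_V4)
  have m2: "mu04 (bv 1) (bv 1) = bv 2" by (rule ext) (simp add: mu04_k bv_def)
  have m3: "mu04 (bv 1) (bv 2) = bv 3" by (rule ext) (simp add: mu04_k bv_def)
  have m4: "mu04 (bv 1) (bv 3) = bv 4" by (rule ext) (simp add: mu04_k bv_def)
  define P where "P = \<phi> (bv 1)"
  have PV: "P \<in> V4" using bij e1 unfolding P_def bij_betw_def by blast
  have f2: "\<phi> (bv 2) = mu04 P P" using mu e1 m2 unfolding P_def by metis
  have f3: "\<phi> (bv 3) = mu04 P (mu04 P P)" using mu e1 m3 f2 unfolding P_def by metis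
  have f4: "\<phi> (bv 4) = mu04 P (mu04 P (mu04 P P))" using mu e1 m4 f3 unfolding P_def by metis
  have phi0: "\<phi> 0 = 0"
  proof -
    have "\<phi> (0 + smul 1 0) = \<phi> 0 + smul 1 (\<phi> 0)" using lin zero_V4 by blast
    then show ?thesis by simp
  qed
  have tb: "TPbr a2 a3 a4 (bv 1) (bv 2) = ((0 + smul a2 (bv 2)) + smul a3 (bv 3)) + smul a4 (bv 4)"
    by (rule ext) (simp add: TPbr_k bv_def smul_def)
  have s1: "0 + smul a2 (bv 2) \<in> V4" "(0 + smul a2 (bv 2)) + smul a3 (bv 3) \<in> V4"
    by (simp_all add: e1 plus_V4 smul_V4)
  have "\<phi> (TPbr a2 a3 a4 (bv 1) (bv 2)) = smul a2 (mu04 P P) + smul a3 (mu04 P (mu04 P P)) + smul a4 (mu04 P (mu04 P (mu04 P P)))"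
  proof -
    have l1: "\<phi> (0 + smul a2 (bv 2)) = \<phi> 0 + smul a2 (\<phi> (bv 2))" using lin e1 zero_V4 by blast
    have l2: "\<phi> ((0 + smul a2 (bv 2)) + smul a3 (bv 3)) = \<phi> (0 + smul a2 (bv 2)) + smul a3 (\<phi> (bv 3))"
      using lin e1 s1 by blast
    have l3: "\<phi> (((0 + smul a2 (bv 2)) + smul a3 (bv 3)) + smul a4 (bv 4)) = \<phi> ((0 + smul a2 (bv 2)) + smul a3 (bv 3)) + smul a4 (\<phi> (bv 4))"
      using lin e1 s1 by blast
    show ?thesis unfolding tb l3 l2 l1 phi0 f2 f3 f4 by simp
  qed
  moreover have "\<phi> (TPbr a2 a3 a4 (bv 1) (bv 2)) = TPbr b2 b3 b4 P (mu04 P P)"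
    using br e1 f2 unfolding P_def by metis
  moreover have "P 1 \<noteq> 0"
  proof
    assume "P 1 = 0"
    then have "mu04 P (mu04 P P) = 0" by (simp add: fun_eq_iff mu04_k)
    then have "\<phi> (bv 3) = \<phi> 0" using f3 phi0 by simp
    then have "bv 3 = 0" using bij e1 unfolding bij_betw_def inj_on_def by (metis zero_V4)
    then have "bv 3 3 = 0" by simp
    then show False by (simp add: bv_def)
  qed
  ultimately show ?thesis using that PV by metis
qed

lemma noniso:
  "(\<forall>\<alpha>. \<not> TP_iso (TPbr 1 0 0) (TPbr 0 \<alpha> 0))
       \<and> \<not> TP_iso (TPbr 1 0 0) (TPbr 0 0 1)
       \<and> (\<forall>\<alpha>. \<not> TP_iso (TPbr 0 \<alpha> 0) (TPbr 0 0 1))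
       \<and> (\<forall>\<alpha> \<beta>. \<alpha> \<noteq> \<beta> \<longrightarrow> \<not> TP_iso (TPbr 0 \<alpha> 0) (TPbr 0 \<beta> 0))"
proof (intro conjI allI impI notI)
  fix \<alpha> assume "TP_iso (TPbr 1 0 0) (TPbr 0 \<alpha> 0)"
  then obtain P where "P 1 \<noteq> 0" and eq: "smul 1 (mu04 P P) + smul 0 (mu04 P (mu04 P P)) + smul 0 (mu04 P (mu04 P (mu04 P P)))
      = TPbr 0 \<alpha> 0 P (mu04 P P)" by (rule iso_facts)
  from fun_cong[OF eq, of 2] \<open>P 1 \<noteq> 0\<close> show False by (simp add: mu04_k TPbr_k smul_def)
next
  assume "TP_iso (TPbr 1 0 0) (TPbr 0 0 1)"
  then obtain P where "P 1 \<noteq> 0" and eq: "smul 1 (mu04 P P) + smul 0 (mu04 P (mu04 P P)) + smul 0 (mu04 P (mu04 P (mu04 P P)))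
      = TPbr 0 0 1 P (mu04 P P)" by (rule iso_facts)
  from fun_cong[OF eq, of 2] \<open>P 1 \<noteq> 0\<close> show False by (simp add: mu04_k TPbr_k smul_def)
next
  fix \<alpha> assume "TP_iso (TPbr 0 \<alpha> 0) (TPbr 0 0 1)"
  then obtain P where "P 1 \<noteq> 0" and eq: "smul 0 (mu04 P P) + smul \<alpha> (mu04 P (mu04 P P)) + smul 0 (mu04 P (mu04 P (mu04 P P)))
      = TPbr 0 0 1 P (mu04 P P)" by (rule iso_facts)
  from fun_cong[OF eq, of 3] \<open>P 1 \<noteq> 0\<close> have "\<alpha> = 0" by (simp add: mu04_k TPbr_k smul_def)
  with fun_cong[OF eq, of 4] \<open>P 1 \<noteq> 0\<close> show False by (simp add: mu04_k TPbr_k smul_def)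
next
  fix \<alpha> \<beta> :: complex assume ne: "\<alpha> \<noteq> \<beta>" and iso: "TP_iso (TPbr 0 \<alpha> 0) (TPbr 0 \<beta> 0)"
  from iso obtain P where "P 1 \<noteq> 0" and eq: "smul 0 (mu04 P P) + smul \<alpha> (mu04 P (mu04 P P)) + smul 0 (mu04 P (mu04 P (mu04 P P)))
      = TPbr 0 \<beta> 0 P (mu04 P P)" by (rule iso_facts)
  from fun_cong[OF eq, of 3] \<open>P 1 \<noteq> 0\<close> ne show False by (simp add: mu04_k TPbr_k smul_def)
qed


lemma decomp:
  assumes "u \<in> V4"
  shows "u = (((0 + smul (u 1) (bv 1)) + smul (u 2) (bv 2)) + smul (u 3) (bv 3)) + smul (u 4) (bv 4)"
proof
  fix k show "u k = ((((0 + smul (u 1) (bv 1)) + smul (u 2) (bv 2)) + smul (u 3) (bv 3)) + smul (u 4) (bv 4)) k"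
    using V4_out[OF assms, of k] by (cases k rule: k_cases) (simp_all add: smul_def bv_def)
qed

lemma lin_expand:
  assumes lin: "\<forall>x\<in>V4. \<forall>y\<in>V4. \<forall>c. L (x + smul c y) = L x + smul c (L y)" and u: "u \<in> V4"
  shows "L u k = u 1 * L (bv 1) k + u 2 * L (bv 2) k + u 3 * L (bv 3) k + u 4 * L (bv 4) k"
proof -
  have e1: "bv 1 \<in> V4" "bv 2 \<in> V4" "bv 3 \<in> V4" "bv 4 \<in> V4" by (simp_all add: bv_V4)
  have L0: "L 0 = 0"
  proof -
    have "L (0 + smul 1 0) = L 0 + smul 1 (L 0)" using lin zero_V4 by blast
    then show ?thesis by simp
  qed
  have s1: "0 + smul (u 1) (bv 1) \<in> V4" "(0 + smul (u 1) (bv 1)) + smul (u 2) (bv 2) \<in> V4"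
    "((0 + smul (u 1) (bv 1)) + smul (u 2) (bv 2)) + smul (u 3) (bv 3) \<in> V4"
    by (auto intro!: plus_V4 smul_V4 bv_V4)
  have l1: "L (0 + smul (u 1) (bv 1)) = L 0 + smul (u 1) (L (bv 1))" using lin e1 zero_V4 by blast
  have l2: "L ((0 + smul (u 1) (bv 1)) + smul (u 2) (bv 2)) = L (0 + smul (u 1) (bv 1)) + smul (u 2) (L (bv 2))"
    using lin e1 s1 by blast
  have l3: "L (((0 + smul (u 1) (bv 1)) + smul (u 2) (bv 2)) + smul (u 3) (bv 3)) = L ((0 + smul (u 1) (bv 1)) + smul (u 2) (bv 2)) + smul (u 3) (L (bv 3))"
    using lin e1 s1 by blast
  have l4: "L ((((0 + smul (u 1) (bv 1)) + smul (u 2) (bv 2)) + smul (u 3) (bv 3)) + smul (u 4) (bv 4)) = L (((0 + smul (u 1) (bv 1)) + smul (u 2) (bv 2)) + smul (u 3) (bv 3)) + smul (u 4) (L (bv 4))"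
    using lin e1 s1 by blast
  have "L u = L ((((0 + smul (u 1) (bv 1)) + smul (u 2) (bv 2)) + smul (u 3) (bv 3)) + smul (u 4) (bv 4))"
    using decomp[OF u] by metis
  also have "\<dots> = smul (u 1) (L (bv 1)) + smul (u 2) (L (bv 2)) + smul (u 3) (L (bv 3)) + smul (u 4) (L (bv 4))"
    unfolding l4 l3 l2 l1 L0 by simp
  finally show ?thesis by (simp add: smul_def)
qed

lemma sumdiff: "(x::complex) + y = s \<Longrightarrow> x - y = d \<Longrightarrow> x = (s + d) / 2 \<and> y = (s - d) / 2"
  by (auto simp: field_simps)

lemma classify:
  assumes TP: "is_TP_structure br"
  shows "\<forall>x\<in>V4. \<forall>y\<in>V4. br x y = TPbr (br (bv 1) (bv 2) 2) (br (bv 1) (bv 2) 3) (br (bv 1) (bv 2) 4) x y"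
proof -
  have clo: "\<forall>x\<in>V4. \<forall>y\<in>V4. br x y \<in> V4"
    and lin1: "\<forall>x\<in>V4. \<forall>y\<in>V4. \<forall>z\<in>V4. \<forall>c. br (x + smul c y) z = br x z + smul c (br y z)"
    and lin2: "\<forall>x\<in>V4. \<forall>y\<in>V4. \<forall>z\<in>V4. \<forall>c. br z (x + smul c y) = br z x + smul c (br z y)"
    and alt: "\<forall>x\<in>V4. br x x = 0"
    and tp: "\<forall>x\<in>V4. \<forall>y\<in>V4. \<forall>z\<in>V4. smul 2 (mu04 z (br x y)) = br (mu04 z x) y + br x (mu04 z y)"
    using TP unfolding is_TP_structure_def by blast+
  have e: "bv 1 \<in> V4" "bv 2 \<in> V4" "bv 3 \<in> V4" "bv 4 \<in> V4" by (simp_all add: bv_V4)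
  have antisym: "br x y k = - br y x k" if "x \<in> V4" "y \<in> V4" for x y k
  proof -
    have xy: "x + smul 1 y \<in> V4" using that by (simp add: plus_V4)
    have i1: "br (x + smul 1 y) (x + smul 1 y) = br x (x + smul 1 y) + smul 1 (br y (x + smul 1 y))"
      using lin1 that xy by blast
    have i2: "br x (x + smul 1 y) = br x x + smul 1 (br x y)" using lin2 that by blast
    have i3: "br y (x + smul 1 y) = br y x + smul 1 (br y y)" using lin2 that by blast
    have "0 = br (x + smul 1 y) (x + smul 1 y)" using alt xy by simp
    also have "\<dots> = br x y + br y x" unfolding i1 i2 i3 using alt that by simp
    finally have "(br x y + br y x) k = 0" by simp
    then show ?thesis by (simp add: eq_neg_iff_add_eq_0)
  qed
  have brz: "br x 0 = 0" if "x \<in> V4" for x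
  proof -
    have "br x (0 + smul 1 0) = br x 0 + smul 1 (br x 0)" using lin2 that zero_V4 by blast
    then show ?thesis by simp
  qed
  have m11: "mu04 (bv 1) (bv 1) = bv 2" by (rule ext) (simp add: mu04_k bv_def)
  have m12: "mu04 (bv 1) (bv 2) = bv 3" by (rule ext) (simp add: mu04_k bv_def)
  have m13: "mu04 (bv 1) (bv 3) = bv 4" by (rule ext) (simp add: mu04_k bv_def)
  have m14: "mu04 (bv 1) (bv 4) = 0" by (rule ext) (simp add: mu04_k bv_def)
  have m21: "mu04 (bv 2) (bv 1) = bv 3" by (rule ext) (simp add: mu04_k bv_def)
  have m22: "mu04 (bv 2) (bv 2) = bv 4" by (rule ext) (simp add: mu04_k bv_def)
  have mu1: "mu04 (bv 1) w k = (if k = 2 then w 1 else if k = 3 then w 2 else if k = 4 then w 3 else 0)" for w k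
    by (simp add: mu04_k bv_def)
  have mu2: "mu04 (bv 2) w k = (if k = 3 then w 1 else if k = 4 then w 2 else 0)" for w k
    by (simp add: mu04_k bv_def)
  have V12: "smul 2 (mu04 (bv 1) (br (bv 1) (bv 2))) = br (bv 2) (bv 2) + br (bv 1) (bv 3)"
    using tp e m11 m12 by metis
  have V13: "smul 2 (mu04 (bv 1) (br (bv 1) (bv 3))) = br (bv 2) (bv 3) + br (bv 1) (bv 4)"
    using tp e m11 m13 by metis
  have V14: "smul 2 (mu04 (bv 1) (br (bv 1) (bv 4))) = br (bv 2) (bv 4) + br (bv 1) 0"
    using tp e m11 m14 by metis
  have V23: "smul 2 (mu04 (bv 1) (br (bv 2) (bv 3))) = br (bv 3) (bv 3) + br (bv 2) (bv 4)"
    using tp e m12 m13 by metis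
  have V24: "smul 2 (mu04 (bv 1) (br (bv 2) (bv 4))) = br (bv 3) (bv 4) + br (bv 2) 0"
    using tp e m12 m14 by metis
  have W12: "smul 2 (mu04 (bv 2) (br (bv 1) (bv 2))) = br (bv 3) (bv 2) + br (bv 1) (bv 4)"
    using tp e m21 m22 by metis
  have z: "br (bv i) (bv i) = 0" "br (bv i) 0 = 0" if "1 \<le> i" "i \<le> 4" for i
    using alt brz bv_V4[OF that] by auto
  note zz = z[of 1] z[of 2] z[of 3] z[of 4]
  have a32: "br (bv 3) (bv 2) k = - br (bv 2) (bv 3) k" for k using antisym e by blast
  let ?B = "\<lambda>i j k. br (bv i) (bv j) k"
  have E12: "?B 1 3 k = 2 * mu04 (bv 1) (br (bv 1) (bv 2)) k" for k
    using fun_cong[OF V12, of k] zz by (simp add: smul_def)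
  have E13: "?B 2 3 k + ?B 1 4 k = 2 * mu04 (bv 1) (br (bv 1) (bv 3)) k" for k
    using fun_cong[OF V13, of k] zz by (simp add: smul_def)
  have E14: "?B 2 4 k = 2 * mu04 (bv 1) (br (bv 1) (bv 4)) k" for k
    using fun_cong[OF V14, of k] zz by (simp add: smul_def)
  have E23: "?B 2 4 k = 2 * mu04 (bv 1) (br (bv 2) (bv 3)) k" for k
    using fun_cong[OF V23, of k] zz by (simp add: smul_def)
  have E24: "?B 3 4 k = 2 * mu04 (bv 1) (br (bv 2) (bv 4)) k" for k
    using fun_cong[OF V24, of k] zz by (simp add: smul_def)
  have F12: "?B 1 4 k - ?B 2 3 k = 2 * mu04 (bv 2) (br (bv 1) (bv 2)) k" for k
    using fun_cong[OF W12, of k] a32[of k] by (simp add: smul_def)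
  note E = E12 E13 E14 E23 E24 F12
  have b13: "?B 1 3 1 = 0" "?B 1 3 2 = 2 * ?B 1 2 1" "?B 1 3 3 = 2 * ?B 1 2 2" "?B 1 3 4 = 2 * ?B 1 2 3"
    using E12[of 1] E12[of 2] E12[of 3] E12[of 4] by (simp_all add: mu1 mu1[simplified])
  have s1: "?B 1 4 1 = 0 \<and> ?B 2 3 1 = 0"
    using sumdiff[OF E13[of 1, THEN trans[OF add.commute]] F12[of 1]] by (simp add: mu1 mu2 mu1[simplified] mu2[simplified])
  have s2: "?B 1 4 2 = 0 \<and> ?B 2 3 2 = 0"
    using sumdiff[OF E13[of 2, THEN trans[OF add.commute]] F12[of 2]] b13 by (simp add: mu1 mu2 mu1[simplified] mu2[simplified])
  have s3: "?B 1 4 3 = 3 * ?B 1 2 1 \<and> ?B 2 3 3 = ?B 1 2 1"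
    using sumdiff[OF E13[of 3, THEN trans[OF add.commute]] F12[of 3]] b13 by (simp add: mu1 mu2 mu1[simplified] mu2[simplified])
  have s4: "?B 1 4 4 = 3 * ?B 1 2 2 \<and> ?B 2 3 4 = ?B 1 2 2"
    using sumdiff[OF E13[of 4, THEN trans[OF add.commute]] F12[of 4]] b13 by (simp add: mu1 mu2 mu1[simplified] mu2[simplified])
  have a1: "?B 1 2 1 = 0"
    using E14[of 4] E23[of 4] s3 by (simp add: mu1 mu1[simplified])
  have b24: "?B 2 4 k = 0" for k
    using E14[of k] s1 s2 s3 a1 by (cases k rule: k_cases) (simp_all add: mu1 mu1[simplified])
  have b34: "?B 3 4 k = 0" for k
    using E24[of k] b24 by (simp add: mu1 mu1[simplified])
  have anti: "?B 2 1 k = - ?B 1 2 k" "?B 3 1 k = - ?B 1 3 k" "?B 4 1 k = - ?B 1 4 k"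
    "?B 3 2 k = - ?B 2 3 k" "?B 4 2 k = - ?B 2 4 k" "?B 4 3 k = - ?B 3 4 k" for k
    using antisym e by blast+
  have rowexp: "br (bv i) y k = y 1 * ?B i 1 k + y 2 * ?B i 2 k + y 3 * ?B i 3 k + y 4 * ?B i 4 k"
    if "y \<in> V4" "1 \<le> i" "i \<le> 4" for y i k
  proof -
    have "\<forall>x\<in>V4. \<forall>y\<in>V4. \<forall>c. br (bv i) (x + smul c y) = br (bv i) x + smul c (br (bv i) y)"
      using lin2 bv_V4[OF that(2,3)] by blast
    from lin_expand[OF this that(1)] show ?thesis .
  qed
  show ?thesis
  proof (intro ballI ext)
    fix x y k assume x: "x \<in> V4" and y: "y \<in> V4"
    have "\<forall>u\<in>V4. \<forall>v\<in>V4. \<forall>c. br (u + smul c v) y = br u y + smul c (br v y)"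
      using lin1 y by blast
    from lin_expand[OF this x]
    have ex: "br x y k = x 1 * br (bv 1) y k + x 2 * br (bv 2) y k + x 3 * br (bv 3) y k + x 4 * br (bv 4) y k" .
    have r1: "br (bv 1) y k = y 1 * ?B 1 1 k + y 2 * ?B 1 2 k + y 3 * ?B 1 3 k + y 4 * ?B 1 4 k"
      by (rule rowexp[OF y]) simp_all
    have r2: "br (bv 2) y k = y 1 * ?B 2 1 k + y 2 * ?B 2 2 k + y 3 * ?B 2 3 k + y 4 * ?B 2 4 k"
      by (rule rowexp[OF y]) simp_all
    have r3: "br (bv 3) y k = y 1 * ?B 3 1 k + y 2 * ?B 3 2 k + y 3 * ?B 3 3 k + y 4 * ?B 3 4 k"
      by (rule rowexp[OF y]) simp_all
    have r4: "br (bv 4) y k = y 1 * ?B 4 1 k + y 2 * ?B 4 2 k + y 3 * ?B 4 3 k + y 4 * ?B 4 4 k"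
      by (rule rowexp[OF y]) simp_all
    have full: "br x y k = x 1 * (y 1 * ?B 1 1 k + y 2 * ?B 1 2 k + y 3 * ?B 1 3 k + y 4 * ?B 1 4 k)
       + x 2 * (y 1 * ?B 2 1 k + y 2 * ?B 2 2 k + y 3 * ?B 2 3 k + y 4 * ?B 2 4 k)
       + x 3 * (y 1 * ?B 3 1 k + y 2 * ?B 3 2 k + y 3 * ?B 3 3 k + y 4 * ?B 3 4 k)
       + x 4 * (y 1 * ?B 4 1 k + y 2 * ?B 4 2 k + y 3 * ?B 4 3 k + y 4 * ?B 4 4 k)"
      using ex r1 r2 r3 r4 by simp
    have out: "br x y k = 0" if "\<not> (1 \<le> k \<and> k \<le> 4)"
      using clo x y V4_out that by blast
    show "br x y k = TPbr (?B 1 2 2) (?B 1 2 3) (?B 1 2 4) x y k"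
    proof (cases k rule: k_cases)
      case 5 then show ?thesis using out by (simp add: TPbr_k)
    qed (unfold full, simp_all add: anti zz b13 s1 s2 s3 s4 a1 b24 b34 TPbr_k algebra_simps del: One_nat_def)+
  qed
qed

theorem mainTheorem4:
  shows "(\<forall>br. is_TP_structure br \<longrightarrow>
            TP_iso br (TPbr 1 0 0) \<or> (\<exists>\<alpha>. TP_iso br (TPbr 0 \<alpha> 0)) \<or> TP_iso br (TPbr 0 0 1))
       \<and> (\<forall>\<alpha>. \<not> TP_iso (TPbr 1 0 0) (TPbr 0 \<alpha> 0))
       \<and> \<not> TP_iso (TPbr 1 0 0) (TPbr 0 0 1)
       \<and> (\<forall>\<alpha>. \<not> TP_iso (TPbr 0 \<alpha> 0) (TPbr 0 0 1))
       \<and> (\<forall>\<alpha> \<beta>. \<alpha> \<noteq> \<beta> \<longrightarrow> \<not> TP_iso (TPbr 0 \<alpha> 0) (TPbr 0 \<beta> 0))"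
proof (intro conjI)
  show "\<forall>br. is_TP_structure br \<longrightarrow>
            TP_iso br (TPbr 1 0 0) \<or> (\<exists>\<alpha>. TP_iso br (TPbr 0 \<alpha> 0)) \<or> TP_iso br (TPbr 0 0 1)"
  proof (intro allI impI)
    fix br assume "is_TP_structure br"
    from classify[OF this] have c: "\<forall>x\<in>V4. \<forall>y\<in>V4. br x y = TPbr (br (bv 1) (bv 2) 2) (br (bv 1) (bv 2) 3) (br (bv 1) (bv 2) 4) x y" .
    from TP_normal[of "br (bv 1) (bv 2) 2" "br (bv 1) (bv 2) 3" "br (bv 1) (bv 2) 4"]
    show "TP_iso br (TPbr 1 0 0) \<or> (\<exists>\<alpha>. TP_iso br (TPbr 0 \<alpha> 0)) \<or> TP_iso br (TPbr 0 0 1)"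
      using TP_iso_cong[OF c] by blast
  qed
qed (use noniso in blast)+

end
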